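(* The following six elements of $\Delta$ are all equal: \begin{gather*} qABC + q^2A^2+q^{-2}B^2+q^2C^2-q A\alpha -q^{-1} B\beta -q C\gamma,\\ qBCA + q^2A^2 + q^2B^2+q^{-2}C^2 -q A\alpha -qB\beta -q^{-1}C\gamma,\\ qCAB + q^{-2}A^2+q^2B^2 +q^2 C^2 -q^{-1} A\alpha -q B \beta -q C\gamma,\\ q^{-1}CBA + q^{-2}A^2+q^{2}B^2+q^{-2}C^2-q^{-1}A\alpha -q B\beta - q^{-1} C\gamma,\\ q^{-1}ACB + q^{-2}A^2 + q^{-2}B^2+q^{2}C^2 -q^{-1} A\alpha -q^{-1}B\beta -q C\gamma,\\ q^{-1}BAC + q^{2}A^2+q^{-2}B^2 +q^{-2}C^2 -q A\alpha -q^{-1} B \beta -q^{-1} C\gamma. \end{gather*}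
   Context: Let $\mathbb F$ be a field and fix a nonzero $q\in\mathbb F$ with $q^4\neq 1$. The universal Askey--Wilson algebra $\Delta$ is the associative $\mathbb F$-algebra with 1 with generators $A,B,C$ subject to the relations that each of $A+\frac{qBC-q^{-1}CB}{q^2-q^{-2}}$, $B+\frac{qCA-q^{-1}AC}{q^2-q^{-2}}$, $C+\frac{qAB-q^{-1}BA}{q^2-q^{-2}}$ is central; $\alpha,\beta,\gamma$ denote these three central elements (in order) each multiplied by $q+q^{-1}$. *)

theory Defs
  imports Main
begin

text \<open>An associative F-algebra with 1 is modelled as a ring 'a together with a
unital ring homomorphism from the field 'k into the centre of 'a (scalars).\<close>

definition alg_emb :: "('k::field \<Rightarrow> 'a::ring_1) \<Rightarrow> bool" where
  "alg_emb emb \<longleftrightarrow> emb 1 = 1 \<and> (\<forall>x y. emb (x + y) = emb x + emb y)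
     \<and> (\<forall>x y. emb (x * y) = emb x * emb y) \<and> (\<forall>x a. emb x * a = a * emb x)"

definition central :: "'a::ring \<Rightarrow> bool" where
  "central z \<longleftrightarrow> (\<forall>y. z * y = y * z)"

definition aw_rel :: "('k::field \<Rightarrow> 'a::ring_1) \<Rightarrow> 'k \<Rightarrow> 'a \<Rightarrow> 'a \<Rightarrow> 'a \<Rightarrow> 'a" where
  "aw_rel emb q X Y Z =
     X + emb (inverse (q^2 - inverse q^2)) * (emb q * Y * Z - emb (inverse q) * Z * Y)"

definition aw_cas :: "('k::field \<Rightarrow> 'a::ring_1) \<Rightarrow> 'k \<Rightarrow> 'a \<Rightarrow> 'a \<Rightarrow> 'a \<Rightarrow> 'a" where
  "aw_cas emb q X Y Z = emb (q + inverse q) * aw_rel emb q X Y Z"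

end

theory Submission imports Defs begin

context fixes emb :: "'k::field \<Rightarrow> 'a::ring_1" assumes E: "alg_emb emb" begin

lemma e1: "emb 1 = 1" using E unfolding alg_emb_def by blast
lemma eadd: "emb (x + y) = emb x + emb y" using E unfolding alg_emb_def by blast
lemma emul: "emb (x * y) = emb x * emb y" using E unfolding alg_emb_def by blast
lemma ecomm: "emb x * a = a * emb x" using E unfolding alg_emb_def by blast
lemma e0: "emb 0 = 0" using eadd[of 0 0] by simp
lemma eminus: "emb (- x) = - emb x" using eadd[of x "-x"] e0 by (metis add.inverse_unique add.right_inverse)
lemma ediff: "emb (x - y) = emb x - emb y" using eadd[of x "-y"] eminus by simp
lemma epow: "emb (x ^ n) = emb x ^ n" by (induction n) (simp_all add: e1 emul)
lemma ecX: "X * (emb x * b) = emb x * (X * b)" by (metis ecomm mult.assoc)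
lemma ecX1: "X * emb x = emb x * X" by (metis ecomm)

lemma nz: fixes q :: "'k" assumes q: "q \<noteq> 0" "q^4 \<noteq> 1" shows "q^2 - inverse q^2 \<noteq> 0"
proof
  assume "q^2 - inverse q^2 = 0"
  hence "q^2 = inverse q ^ 2" using eq_iff_diff_eq_0[of "q^2" "inverse q ^ 2"] by blast
  hence "q^2 = inverse (q^2)" by (simp only: power_inverse)
  hence "q^2*q^2 = 1" using q by (metis division_ring_class.right_inverse power_not_zero)
  thus False using q by (simp add: power2_eq_square power4_eq_xxxx mult.assoc)
qed

lemma cancelT: assumes "q^2 - inverse q^2 \<noteq> 0"
  and "emb (inverse (q^2 - inverse q^2)) * a = emb (inverse (q^2 - inverse q^2)) * b"
  shows "a = b"
proof -
  have i: "(q^2 - inverse q^2) * inverse (q^2 - inverse q^2) = 1" using assms(1) by simp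
  have "emb (q^2 - inverse q^2) * (emb (inverse (q^2 - inverse q^2)) * a) = emb (q^2 - inverse q^2) * (emb (inverse (q^2 - inverse q^2)) * b)"
    using assms(2) by simp
  thus ?thesis by (simp only: mult.assoc[symmetric] emul[symmetric] i e1 mult_1_left)
qed

lemma R:
  assumes q: "q \<noteq> 0" "q^4 \<noteq> 1" and c: "central (aw_rel emb q X Y Z)"
  shows "emb q*X*Y*Z - emb (inverse q)*X*Z*Y = emb q*Y*Z*X - emb (inverse q)*Z*Y*X"
proof -
  define T where "T = emb (inverse (q^2 - inverse q^2))"
  define W where "W = emb q * Y * Z - emb (inverse q) * Z * Y"
  have "X * aw_rel emb q X Y Z = aw_rel emb q X Y Z * X" using c by (simp add: central_def)
  hence "X*X + X*(T*W) = X*X + T*W*X" unfolding aw_rel_def T_def[symmetric] W_def[symmetric]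
    by (simp only: distrib_left distrib_right mult.assoc)
  hence "T*(X*W) = T*(W*X)" unfolding T_def by (simp add: ecX[of X] mult.assoc)
  hence "X*W = W*X" using cancelT[OF nz[OF q]] unfolding T_def by blast
  thus ?thesis unfolding W_def
    by (simp only: right_diff_distrib left_diff_distrib mult.assoc ecX[of X])
qed

lemma K:
  assumes q: "q \<noteq> 0" "q^4 \<noteq> 1"
  shows "emb q*X*aw_cas emb q X Y Z - emb (inverse q)*X*aw_cas emb q X Y Z
     = emb q^2*X^2 - emb (inverse q)^2*X^2 + emb q*X*Y*Z - emb (inverse q)*X*Z*Y"
proof -
  define T where "T = emb (inverse (q^2 - inverse q^2))"
  define W where "W = emb q * Y * Z - emb (inverse q) * Z * Y"
  have s: "(q - inverse q) * (q + inverse q) = q^2 - inverse q^2"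
    by (simp add: algebra_simps power2_eq_square)
  have i: "(q^2 - inverse q^2) * inverse (q^2 - inverse q^2) = 1" using nz[OF q] by simp
  have ss: "emb (q - inverse q) * emb (q + inverse q) = emb (q^2 - inverse q^2)" by (simp only: emul[symmetric] s)
  have "emb q*X*aw_cas emb q X Y Z - emb (inverse q)*X*aw_cas emb q X Y Z
      = emb (q - inverse q) * X * (emb (q + inverse q) * (X + T * W))"
    unfolding aw_cas_def aw_rel_def T_def[symmetric] W_def[symmetric] ediff
    by (simp only: left_diff_distrib)
  also have "\<dots> = emb (q - inverse q) * emb (q + inverse q) * (X * X + T * (X * W))"
    by (simp only: distrib_left distrib_right mult.assoc ecX[of X] T_def)
  also have "\<dots> = emb (q^2 - inverse q^2) * (X * X) + X * W"
    unfolding ss by (simp only: distrib_left T_def mult.assoc[symmetric] emul[symmetric] i e1 mult_1_left)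
  also have "\<dots> = emb q^2*X^2 - emb (inverse q)^2*X^2 + emb q*X*Y*Z - emb (inverse q)*X*Z*Y"
    unfolding W_def ediff epow
    apply (simp only: power2_eq_square right_diff_distrib left_diff_distrib mult.assoc ecX[of X])
    by (simp only: add_diff_eq diff_right_commute)
  finally show ?thesis .
qed
end

lemma lin:
  fixes pABC pBCA pCAB mCBA mACB mBAC pA2 mA2 pB2 mB2 pC2 mC2 pAa mAa pBb mBb pCc mCc :: "'a::ab_group_add"
  assumes KA: "pAa - mAa = pA2 - mA2 + pABC - mACB"
    and KB: "pBb - mBb = pB2 - mB2 + pBCA - mBAC"
    and KC: "pCc - mCc = pC2 - mC2 + pCAB - mCBA"
    and RA: "pABC - mACB = pBCA - mCBA"
    and RB: "pBCA - mBAC = pCAB - mACB"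
  shows "let e1 = pABC + pA2 + mB2 + pC2 - pAa - mBb - pCc;
             e2 = pBCA + pA2 + pB2 + mC2 - pAa - pBb - mCc;
             e3 = pCAB + mA2 + pB2 + pC2 - mAa - pBb - pCc;
             e4 = mCBA + mA2 + pB2 + mC2 - mAa - pBb - mCc;
             e5 = mACB + mA2 + mB2 + pC2 - mAa - mBb - pCc;
             e6 = mBAC + pA2 + mB2 + mC2 - pAa - mBb - mCc
         in e1 = e2 \<and> e2 = e3 \<and> e3 = e4 \<and> e4 = e5 \<and> e5 = e6"
proof -
  have KA': "pAa = mAa + (pA2 - mA2 + pABC - mACB)" using KA by (simp add: diff_eq_eq add.commute)
  have KB': "pBb = mBb + (pB2 - mB2 + pBCA - mBAC)" using KB by (simp add: diff_eq_eq add.commute)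
  have KC': "pCc = mCc + (pC2 - mC2 + pCAB - mCBA)" using KC by (simp add: diff_eq_eq add.commute)
  have RA': "pABC = mACB + (pBCA - mCBA)" using RA by (simp add: diff_eq_eq add.commute)
  have RB': "pBCA = mBAC + (pCAB - mACB)" using RB by (simp add: diff_eq_eq add.commute)
  show ?thesis unfolding Let_def KA' KB' KC' by (simp add: RA' RB' algebra_simps)
qed

theorem lemma6p1:
  fixes emb :: "'k::field \<Rightarrow> 'a::ring_1" and q :: 'k and A B C :: 'a
  assumes "alg_emb emb" and "q \<noteq> 0" and "q ^ 4 \<noteq> 1"
    and "central (aw_rel emb q A B C)" and "central (aw_rel emb q B C A)"
    and "central (aw_rel emb q C A B)"
  shows "let \<alpha> = aw_cas emb q A B C; \<beta> = aw_cas emb q B C A; \<gamma> = aw_cas emb q C A B;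
             p = emb q; m = emb (inverse q);
             e1 = p*A*B*C + p^2*A^2 + m^2*B^2 + p^2*C^2 - p*A*\<alpha> - m*B*\<beta> - p*C*\<gamma>;
             e2 = p*B*C*A + p^2*A^2 + p^2*B^2 + m^2*C^2 - p*A*\<alpha> - p*B*\<beta> - m*C*\<gamma>;
             e3 = p*C*A*B + m^2*A^2 + p^2*B^2 + p^2*C^2 - m*A*\<alpha> - p*B*\<beta> - p*C*\<gamma>;
             e4 = m*C*B*A + m^2*A^2 + p^2*B^2 + m^2*C^2 - m*A*\<alpha> - p*B*\<beta> - m*C*\<gamma>;
             e5 = m*A*C*B + m^2*A^2 + m^2*B^2 + p^2*C^2 - m*A*\<alpha> - m*B*\<beta> - p*C*\<gamma>;
             e6 = m*B*A*C + p^2*A^2 + m^2*B^2 + m^2*C^2 - p*A*\<alpha> - m*B*\<beta> - m*C*\<gamma>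
         in e1 = e2 \<and> e2 = e3 \<and> e3 = e4 \<and> e4 = e5 \<and> e5 = e6"
proof -
  note E = assms(1) and q = assms(2,3)
  define \<alpha> where "\<alpha> = aw_cas emb q A B C"
  define \<beta> where "\<beta> = aw_cas emb q B C A"
  define \<gamma> where "\<gamma> = aw_cas emb q C A B"
  define p where "p = emb q"
  define m where "m = emb (inverse q)"
  have KA: "p*A*\<alpha> - m*A*\<alpha> = p^2*A^2 - m^2*A^2 + p*A*B*C - m*A*C*B"
    unfolding p_def m_def \<alpha>_def by (rule K[OF E q])
  have KB: "p*B*\<beta> - m*B*\<beta> = p^2*B^2 - m^2*B^2 + p*B*C*A - m*B*A*C"
    unfolding p_def m_def \<beta>_def by (rule K[OF E q])
  have KC: "p*C*\<gamma> - m*C*\<gamma> = p^2*C^2 - m^2*C^2 + p*C*A*B - m*C*B*A"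
    unfolding p_def m_def \<gamma>_def by (rule K[OF E q])
  have RA: "p*A*B*C - m*A*C*B = p*B*C*A - m*C*B*A"
    unfolding p_def m_def by (rule R[OF E q assms(4)])
  have RB: "p*B*C*A - m*B*A*C = p*C*A*B - m*A*C*B"
    unfolding p_def m_def by (rule R[OF E q assms(5)])
  show ?thesis
    using lin[OF KA KB KC RA RB] unfolding \<alpha>_def[symmetric] \<beta>_def[symmetric] \<gamma>_def[symmetric] p_def[symmetric] m_def[symmetric] by (simp only: Let_def)
qed

end
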